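(* Let $R$, $G$, $*$, $\sigma$ and $\mathcal{S}$ be as in the context, and suppose $\mathcal{S}$ is anticommutative. Let $x,y\in G\setminus G_*$. - (i) If $(x,y)=1$, then $c_x=c_y$ and $2(1+\sigma(xy))=0=2(\sigma(x)+\sigma(y))$. - (ii) If $(x,y)\neq 1$, then one of the following holds: - (a) $(x,y)=c_x=c_y=c_{xy}$ and $1+\sigma(x)+\sigma(y)+\sigma(xy)=0$; - (b) $(x,y)=c_x\neq c_y=c_{xy}$ and $\sigma(x)=-1$; - (c) $(x,y)=c_y\neq c_x=c_{xy}$ and $\sigma(y)=-1$; - (d) $(x,y)=c_{xy}\neq c_x=c_y$, $\sigma(xy)=-1$ and $\sigma(x)=-\sigma(y)$.
   Context: Throughout, $R$ is a commutative ring with unity with $\operatorname{char}(R)\neq 2$, and $\mathcal{U}(R)$ is its unit group. $G$ is a group with an involution $*$, i.e. a map $x\mapsto x^*$ with $(xy)^*=y^*x^*$ and $(x^* )^*=x$. The map $\sigma:G\to\mathcal{U}(R)$ is a nontrivial group homomorphism with kernel $N=\ker\sigma$, and it is compatible with $*$: $xx^*\in N$ for all $x\in G$. The group ring $RG$ carries the involution $\left(\sum_{x\in G}\alpha_x x\right)^{\sigma*}=\sum_{x\in G}\sigma(x)\alpha_x x^*$. Write $G_*=\{x\in G: x^*=x\}$ and $N_*=G_*\cap N$. Let $\mathcal{S}$ be the $R$-submodule of $RG$ spanned by the union of the following three sets: - $2\mathcal{S}_1=\{2x: x\in N_*\}$; - $\mathcal{S}_2=\{\alpha x: x\in G_*\setminus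 N,\ \alpha\in R,\ \alpha(1-\sigma(x))=0\}$; - $\mathcal{S}_3=\{x+\sigma(x)x^*: x\in G\setminus G_*\}$. $\mathcal{S}$ is called anticommutative if $ab+ba=0$ for all $a,b\in\mathcal{S}$. The commutator is $(x,y)=x^{-1}y^{-1}xy$, and for $a\in G$ we put $c_a=a^*a^{-1}$. *)

theory Defs
  imports "HOL-Algebra.Group"
begin

text \<open>Elements of the group ring RG are represented as functions 'g => 'r
 (finitely supported on carrier G for all elements we consider).\<close>

definition gdelta :: "'g \<Rightarrow> 'g \<Rightarrow> 'r::comm_ring_1" where
  "gdelta x = (\<lambda>z. if z = x then 1 else 0)"

definition gsmult :: "'r::comm_ring_1 \<Rightarrow> ('g \<Rightarrow> 'r) \<Rightarrow> 'g \<Rightarrow> 'r" where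
  "gsmult \<alpha> a = (\<lambda>z. \<alpha> * a z)"

definition gadd :: "('g \<Rightarrow> 'r::comm_ring_1) \<Rightarrow> ('g \<Rightarrow> 'r) \<Rightarrow> 'g \<Rightarrow> 'r" where
  "gadd a b = (\<lambda>z. a z + b z)"

definition gconv :: "('g, 'm) monoid_scheme \<Rightarrow> ('g \<Rightarrow> 'r::comm_ring_1) \<Rightarrow> ('g \<Rightarrow> 'r) \<Rightarrow> 'g \<Rightarrow> 'r" where
  "gconv G a b = (\<lambda>z. if z \<in> carrier G
       then (\<Sum>x\<in>{x \<in> carrier G. a x \<noteq> 0}. a x * b (inv\<^bsub>G\<^esub> x \<otimes>\<^bsub>G\<^esub> z)) else 0)"

text \<open>The generating set 2S_1 \<union> S_2 \<union> S_3.\<close>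
definition S_gens :: "('g, 'm) monoid_scheme \<Rightarrow> ('g \<Rightarrow> 'g) \<Rightarrow> ('g \<Rightarrow> 'r::comm_ring_1) \<Rightarrow> ('g \<Rightarrow> 'r) set" where
  "S_gens G star \<sigma> =
     {gsmult 2 (gdelta x) | x. x \<in> carrier G \<and> star x = x \<and> \<sigma> x = 1}
   \<union> {gsmult \<alpha> (gdelta x) | x \<alpha>. x \<in> carrier G \<and> star x = x \<and> \<sigma> x \<noteq> 1 \<and> \<alpha> * (1 - \<sigma> x) = 0}
   \<union> {gadd (gdelta x) (gsmult (\<sigma> x) (gdelta (star x))) | x. x \<in> carrier G \<and> star x \<noteq> x}"

inductive_set rspan :: "('g \<Rightarrow> 'r::comm_ring_1) set \<Rightarrow> ('g \<Rightarrow> 'r) set" for A where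
  zero: "(\<lambda>z. 0) \<in> rspan A"
| gen: "a \<in> A \<Longrightarrow> a \<in> rspan A"
| add: "a \<in> rspan A \<Longrightarrow> b \<in> rspan A \<Longrightarrow> gadd a b \<in> rspan A"
| smult: "a \<in> rspan A \<Longrightarrow> gsmult \<alpha> a \<in> rspan A"

definition S_set :: "('g, 'm) monoid_scheme \<Rightarrow> ('g \<Rightarrow> 'g) \<Rightarrow> ('g \<Rightarrow> 'r::comm_ring_1) \<Rightarrow> ('g \<Rightarrow> 'r) set" where
  "S_set G star \<sigma> = rspan (S_gens G star \<sigma>)"

definition S_anticomm :: "('g, 'm) monoid_scheme \<Rightarrow> ('g \<Rightarrow> 'g) \<Rightarrow> ('g \<Rightarrow> 'r::comm_ring_1) \<Rightarrow> bool" where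
  "S_anticomm G star \<sigma> \<longleftrightarrow>
     (\<forall>a\<in>S_set G star \<sigma>. \<forall>b\<in>S_set G star \<sigma>. gadd (gconv G a b) (gconv G b a) = (\<lambda>z. 0))"

definition gcomm :: "('g, 'm) monoid_scheme \<Rightarrow> 'g \<Rightarrow> 'g \<Rightarrow> 'g" where
  "gcomm G x y = inv\<^bsub>G\<^esub> x \<otimes>\<^bsub>G\<^esub> inv\<^bsub>G\<^esub> y \<otimes>\<^bsub>G\<^esub> x \<otimes>\<^bsub>G\<^esub> y"

definition cstar :: "('g, 'm) monoid_scheme \<Rightarrow> ('g \<Rightarrow> 'g) \<Rightarrow> 'g \<Rightarrow> 'g" where
  "cstar G star a = star a \<otimes>\<^bsub>G\<^esub> inv\<^bsub>G\<^esub> a"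

end

theory Submission
  imports Defs
begin

locale gctx = group G for G :: "('g,'m) monoid_scheme" (structure) +
  fixes x y a b
  assumes xc: "x \<in> carrier G" and yc: "y \<in> carrier G" and ac: "a \<in> carrier G" and bc: "b \<in> carrier G"
    and xa: "a \<otimes> x = x \<otimes> a" and yb: "b \<otimes> y = y \<otimes> b" and aa: "a \<otimes> a = \<one>" and bb: "b \<otimes> b = \<one>"
begin
lemma n1: "b \<noteq> \<one> \<Longrightarrow> x\<otimes>y \<noteq> x\<otimes>(b\<otimes>y)" by (simp add: bc xc yc)
lemma n2: "a \<noteq> \<one> \<Longrightarrow> x\<otimes>y \<noteq> a\<otimes>x\<otimes>y" by (simp add: ac xc yc)
lemma n3: "a \<noteq> \<one> \<Longrightarrow> x\<otimes>(b\<otimes>y) \<noteq> a\<otimes>x\<otimes>(b\<otimes>y)" by (simp add: ac bc xc yc)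
lemma n4: "b \<noteq> \<one> \<Longrightarrow> a\<otimes>x\<otimes>y \<noteq> a\<otimes>x\<otimes>(b\<otimes>y)" by (simp add: ac bc xc yc)
lemma n5: "a \<noteq> \<one> \<Longrightarrow> y\<otimes>x \<noteq> y\<otimes>(a\<otimes>x)" by (metis xa yc xc ac Units_eq Units_l_cancel r_cancel_one Units_m_closed)
lemma n6: "b \<noteq> \<one> \<Longrightarrow> y\<otimes>x \<noteq> b\<otimes>y\<otimes>x" by (simp add: bc xc yc)
lemma n7: "b \<noteq> \<one> \<Longrightarrow> y\<otimes>(a\<otimes>x) \<noteq> b\<otimes>y\<otimes>(a\<otimes>x)" by (simp add: ac bc xc yc)
lemma n8: "a \<noteq> \<one> \<Longrightarrow> b\<otimes>y\<otimes>x \<noteq> b\<otimes>y\<otimes>(a\<otimes>x)" by (simp add: ac bc xc yc)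
lemma e1: "(x\<otimes>y = a\<otimes>x\<otimes>(b\<otimes>y)) = (a = b)" by (metis (no_types, lifting) right_cancel Units_eq     Units_l_cancel ac bb bc  m_assoc m_closed r_one xa     xc yc)
lemma e2: "(x\<otimes>(b\<otimes>y) = a\<otimes>x\<otimes>y) = (a = b)" using ac bc m_assoc xa xc yc by force
lemma e3: "(y\<otimes>x = b\<otimes>y\<otimes>(a\<otimes>x)) = (a = b)" by (metis (no_types, lifting) right_cancel Units_eq     Units_l_cancel ac bb bc  m_assoc m_closed r_one xc     yb yc)
lemma e4: "(y\<otimes>(a\<otimes>x) = b\<otimes>y\<otimes>x) = (a = b)" by (simp add: ac bc m_assoc xc yb yc)
lemma ic1: "x\<otimes>y = y\<otimes>x \<Longrightarrow> a = b \<Longrightarrow> y\<otimes>(a\<otimes>x) = x\<otimes>(b\<otimes>y)" by (metis xa xc yc yb bc m_assoc)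
lemma ic2: "x\<otimes>y = y\<otimes>x \<Longrightarrow> a = b \<Longrightarrow> b\<otimes>y\<otimes>x = x\<otimes>(b\<otimes>y)" by (metis yc xa xc bc m_assoc)
lemma ic3: "x\<otimes>y = y\<otimes>x \<Longrightarrow> a \<noteq> \<one> \<Longrightarrow> x\<otimes>y \<noteq> y\<otimes>(a\<otimes>x)" by (simp add: ac xc yc)
lemma ic4: "x\<otimes>y = y\<otimes>x \<Longrightarrow> b \<noteq> \<one> \<Longrightarrow> x\<otimes>y \<noteq> b\<otimes>y\<otimes>x" by (simp add: bc xc yc)
lemma ab1: "x\<otimes>y \<noteq> y\<otimes>x \<Longrightarrow> a = b \<Longrightarrow> x\<otimes>(b\<otimes>y) \<noteq> y\<otimes>(a\<otimes>x)" by (smt (verit, del_insts) bc m_assoc m_closed right_cancel xa xc yb     yc)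
lemma al1: "x\<otimes>y\<otimes>y = b\<otimes>y\<otimes>(x\<otimes>y) \<Longrightarrow> x\<otimes>y = b\<otimes>y\<otimes>x" by (metis bc m_assoc m_closed right_cancel xc yc)
lemma al2: "b \<noteq> \<one> \<Longrightarrow> x\<otimes>y\<otimes>y \<noteq> x\<otimes>y\<otimes>(b\<otimes>y)" by (simp add: bc xc yc)
lemma al3: "x\<otimes>y \<noteq> y\<otimes>x \<Longrightarrow> x\<otimes>y\<otimes>y \<noteq> y\<otimes>(x\<otimes>y)" by (metis m_assoc m_closed right_cancel xc yc)
lemma be1: "x\<otimes>y = y\<otimes>(a\<otimes>x) \<Longrightarrow> a\<otimes>x\<otimes>y = b\<otimes>y\<otimes>(a\<otimes>x) \<Longrightarrow> a = b" by (simp add: ac bc m_assoc xc yc)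
lemma ga1: "x\<otimes>y = b\<otimes>y\<otimes>x \<Longrightarrow> x\<otimes>(b\<otimes>y) = b\<otimes>y\<otimes>(a\<otimes>x) \<Longrightarrow> a = b" by (metis Units_eq Units_l_cancel ac bc m_assoc m_closed xa xc yb     yc)
lemma ga2: "x\<otimes>y = b\<otimes>y\<otimes>x \<Longrightarrow> a\<otimes>x\<otimes>y = y\<otimes>x \<Longrightarrow> a = b" by (metis (no_types, lifting) ac bb bc      r_cancel_one m_assoc m_closed xc yc)
lemma gc3: "x\<otimes>y = b\<otimes>y\<otimes>x \<Longrightarrow> a\<otimes>x\<otimes>(b\<otimes>y) = y\<otimes>x \<Longrightarrow> x\<otimes>(b\<otimes>y) = y\<otimes>(a\<otimes>x) \<Longrightarrow> y\<otimes>(x\<otimes>(a\<otimes>x)) = a\<otimes>(x\<otimes>(a\<otimes>x))\<otimes>y"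
  by (metis aa ac bb bc m_assoc m_closed xa xc yb yc)
lemma ka: "(x\<otimes>y = y\<otimes>x\<otimes>a) = (x\<otimes>y = y\<otimes>(a\<otimes>x))" by (simp add: ac m_assoc xa xc yc)
lemma kb: "x\<otimes>(b\<otimes>y) = y\<otimes>x \<Longrightarrow> x\<otimes>y = y\<otimes>x\<otimes>b" by (metis bb bc m_assoc m_closed r_one xc yb yc)
lemma wb: "x\<otimes>(b\<otimes>y) = x\<otimes>y\<otimes>b" by (simp add: bc m_assoc xc yb yc)
lemma wa: "a\<otimes>x\<otimes>y = a\<otimes>(x\<otimes>y)" by (simp add: ac m_assoc xc yc)
lemma gc4: "g \<in> carrier G \<Longrightarrow> a \<noteq> \<one> \<Longrightarrow> y\<otimes>g = a\<otimes>g\<otimes>y \<Longrightarrow> g\<otimes>y \<noteq> y\<otimes>g" by (simp add: ac yc)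
lemma gc5: "g \<in> carrier G \<Longrightarrow> a \<noteq> b \<Longrightarrow> y\<otimes>g = a\<otimes>g\<otimes>y \<Longrightarrow> g\<otimes>y \<noteq> b\<otimes>y\<otimes>g" by (metis ac bb bc l_one m_assoc m_closed right_cancel yc)
end


locale actx = group G for G :: "('g,'m) monoid_scheme" (structure) +
  fixes star :: "'g \<Rightarrow> 'g" and \<sigma> :: "'g \<Rightarrow> 'r::comm_ring_1"
  assumes star_closed: "a \<in> carrier G \<Longrightarrow> star a \<in> carrier G"
    and star_mult: "a \<in> carrier G \<Longrightarrow> b \<in> carrier G \<Longrightarrow> star (a \<otimes> b) = star b \<otimes> star a"
    and star_star: "a \<in> carrier G \<Longrightarrow> star (star a) = a"
    and \<sigma>_unit: "a \<in> carrier G \<Longrightarrow> \<sigma> a dvd 1"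
    and \<sigma>_hom: "a \<in> carrier G \<Longrightarrow> b \<in> carrier G \<Longrightarrow> \<sigma> (a \<otimes> b) = \<sigma> a * \<sigma> b"
    and \<sigma>_compat: "a \<in> carrier G \<Longrightarrow> \<sigma> (a \<otimes> star a) = 1"
    and anti: "S_anticomm G star \<sigma>"
    and one_ne_zero: "(1::'r) \<noteq> 0"
    and two_ne_zero: "(2::'r) \<noteq> 0"
begin

definition U :: "'g \<Rightarrow> 'g \<Rightarrow> 'r" where
  "U p = gadd (gdelta p) (gsmult (\<sigma> p) (gdelta (star p)))"
definition D :: "'g \<Rightarrow> 'g \<Rightarrow> 'r" where
  "D g = gsmult 2 (gdelta g)"

lemma conv_fin:
  assumes "finite S" "S \<subseteq> carrier G" "\<And>x. x \<notin> S \<Longrightarrow> a x = 0" "z \<in> carrier G"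
  shows "gconv G a b z = (\<Sum>x\<in>S. a x * b (inv x \<otimes> z))"
proof -
  have "gconv G a b z = (\<Sum>x\<in>{x \<in> carrier G. a x \<noteq> 0}. a x * b (inv x \<otimes> z))"
    using assms(4) by (simp add: gconv_def)
  also have "\<dots> = (\<Sum>x\<in>S. a x * b (inv x \<otimes> z))"
    apply (rule sum.mono_neutral_left)
    using assms by auto
  finally show ?thesis .
qed

lemma inv_mult_eq: "x \<in> carrier G \<Longrightarrow> z \<in> carrier G \<Longrightarrow> r \<in> carrier G \<Longrightarrow> (inv x \<otimes> z = r) = (z = x \<otimes> r)"
  by (metis inv_solve_left m_closed)

lemma U_vanish: "p \<in> carrier G \<Longrightarrow> x \<notin> {p, star p} \<Longrightarrow> U p x = 0"
  by (simp add: U_def gadd_def gsmult_def gdelta_def)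

lemma conv_UU:
  assumes p: "p \<in> carrier G" "star p \<noteq> p" and q: "q \<in> carrier G" and z: "z \<in> carrier G"
  shows "gconv G (U p) (U q) z = (if z = p \<otimes> q then 1 else 0) + (if z = p \<otimes> star q then \<sigma> q else 0)
     + (if z = star p \<otimes> q then \<sigma> p else 0) + (if z = star p \<otimes> star q then \<sigma> p * \<sigma> q else 0)"
proof -
  have sp: "star p \<in> carrier G" "star q \<in> carrier G" using p q star_closed by auto
  have "gconv G (U p) (U q) z = (\<Sum>x\<in>{p, star p}. U p x * U q (inv x \<otimes> z))"
    by (rule conv_fin) (use p sp z U_vanish in auto)
  also have "\<dots> = U p p * U q (inv p \<otimes> z) + U p (star p) * U q (inv (star p) \<otimes> z)"
    using p by simp
  also have "\<dots> = (if z = p \<otimes> q then 1 else 0) + (if z = p \<otimes> star q then \<sigma> q else 0)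
     + (if z = star p \<otimes> q then \<sigma> p else 0) + (if z = star p \<otimes> star q then \<sigma> p * \<sigma> q else 0)"
    using p q sp z by (simp add: U_def gadd_def gsmult_def gdelta_def inv_mult_eq algebra_simps)
  finally show ?thesis .
qed

lemma D_vanish: "x \<noteq> g \<Longrightarrow> D g x = 0"
  by (simp add: D_def gsmult_def gdelta_def)

lemma conv_DU:
  assumes g: "g \<in> carrier G" and q: "q \<in> carrier G" and z: "z \<in> carrier G"
  shows "gconv G (D g) (U q) z = (if z = g \<otimes> q then 2 else 0) + (if z = g \<otimes> star q then 2 * \<sigma> q else 0)"
proof -
  have sp: "star q \<in> carrier G" using q star_closed by auto
  have "gconv G (D g) (U q) z = (\<Sum>x\<in>{g}. D g x * U q (inv x \<otimes> z))"
    by (rule conv_fin) (use g z D_vanish in auto)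
  also have "\<dots> = (if z = g \<otimes> q then 2 else 0) + (if z = g \<otimes> star q then 2 * \<sigma> q else 0)"
    using g q sp z by (simp add: D_def U_def gadd_def gsmult_def gdelta_def inv_mult_eq algebra_simps)
  finally show ?thesis .
qed

lemma conv_UD:
  assumes g: "g \<in> carrier G" and p: "p \<in> carrier G" "star p \<noteq> p" and z: "z \<in> carrier G"
  shows "gconv G (U p) (D g) z = (if z = p \<otimes> g then 2 else 0) + (if z = star p \<otimes> g then 2 * \<sigma> p else 0)"
proof -
  have sp: "star p \<in> carrier G" using p star_closed by auto
  have "gconv G (U p) (D g) z = (\<Sum>x\<in>{p, star p}. U p x * D g (inv x \<otimes> z))"
    by (rule conv_fin) (use p sp z U_vanish in auto)
  also have "\<dots> = U p p * D g (inv p \<otimes> z) + U p (star p) * D g (inv (star p) \<otimes> z)"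
    using p by simp
  also have "\<dots> = (if z = p \<otimes> g then 2 else 0) + (if z = star p \<otimes> g then 2 * \<sigma> p else 0)"
    using p g sp z by (simp add: D_def U_def gadd_def gsmult_def gdelta_def inv_mult_eq algebra_simps)
  finally show ?thesis .
qed

lemma U_in_S: "p \<in> carrier G \<Longrightarrow> star p \<noteq> p \<Longrightarrow> U p \<in> S_set G star \<sigma>"
  unfolding S_set_def U_def by (rule rspan.gen) (auto simp: S_gens_def)

lemma D_in_S1: "g \<in> carrier G \<Longrightarrow> star g = g \<Longrightarrow> \<sigma> g = 1 \<Longrightarrow> D g \<in> S_set G star \<sigma>"
  unfolding S_set_def D_def by (rule rspan.gen) (auto simp: S_gens_def)

lemma D_in_S2: "g \<in> carrier G \<Longrightarrow> star g = g \<Longrightarrow> \<sigma> g \<noteq> 1 \<Longrightarrow> 2 * (1 - \<sigma> g) = 0 \<Longrightarrow> D g \<in> S_set G star \<sigma>"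
  unfolding S_set_def D_def by (rule rspan.gen) (unfold S_gens_def, blast)

lemma anti_at: "a \<in> S_set G star \<sigma> \<Longrightarrow> b \<in> S_set G star \<sigma> \<Longrightarrow> gconv G a b z + gconv G b a z = 0"
  using anti unfolding S_anticomm_def gadd_def by (metis (mono_tags, lifting))


lemma rel_UU:
  assumes p: "p \<in> carrier G" "star p \<noteq> p" and q: "q \<in> carrier G" "star q \<noteq> q" and z: "z \<in> carrier G"
  shows "(if z = p \<otimes> q then 1 else 0) + (if z = p \<otimes> star q then \<sigma> q else 0)
     + (if z = star p \<otimes> q then \<sigma> p else 0) + (if z = star p \<otimes> star q then \<sigma> p * \<sigma> q else 0)
     + ((if z = q \<otimes> p then 1 else 0) + (if z = q \<otimes> star p then \<sigma> p else 0)
     + (if z = star q \<otimes> p then \<sigma> q else 0) + (if z = star q \<otimes> star p then \<sigma> q * \<sigma> p else 0)) = 0"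
  using anti_at[OF U_in_S[OF p] U_in_S[OF q], of z] conv_UU[OF p q(1) z] conv_UU[OF q p(1) z] by simp

lemma rel_DU:
  assumes g: "g \<in> carrier G" "D g \<in> S_set G star \<sigma>" and p: "p \<in> carrier G" "star p \<noteq> p" and z: "z \<in> carrier G"
  shows "(if z = g \<otimes> p then 2 else 0) + (if z = g \<otimes> star p then 2 * \<sigma> p else 0)
     + ((if z = p \<otimes> g then 2 else 0) + (if z = star p \<otimes> g then 2 * \<sigma> p else 0)) = 0"
  using anti_at[OF g(2) U_in_S[OF p], of z] conv_DU[OF g(1) p(1) z] conv_UD[OF g(1) p z] by simp

lemma unit_ne: "(u::'r) dvd 1 \<Longrightarrow> u \<noteq> 0"
  using one_ne_zero by auto

lemma unit_two: "(u::'r) dvd 1 \<Longrightarrow> 2 * u \<noteq> 0"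
  using two_ne_zero by (metis dvd_def mult.assoc mult_1_right mult_zero_left)

lemma unit_two_plus: "(4::'r) = 0 \<Longrightarrow> (u::'r) dvd 1 \<Longrightarrow> 2 + u \<noteq> 0"
proof
  assume f: "(4::'r) = 0" and u: "u dvd 1" and e: "2 + u = 0"
  then have "u = - 2" by (simp add: eq_neg_iff_add_eq_0 add.commute)
  then have "u * u = 4" by simp
  then have "u * u = 0" using f by simp
  moreover have "u * u dvd 1" using mult_dvd_mono[OF u u] by simp
  ultimately show False using one_ne_zero by simp
qed

lemma star_one: "star \<one> = \<one>"
proof -
  have "star \<one> = star (\<one> \<otimes> \<one>)" by simp
  also have "\<dots> = star \<one> \<otimes> star \<one>" by (rule star_mult) auto
  finally show ?thesis using star_closed[of \<one>] by simp
qed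

lemma sigma_one: "\<sigma> \<one> = 1"
  using \<sigma>_compat[of \<one>] star_one by simp

lemma sq_facts:
  assumes p: "p \<in> carrier G" "star p \<noteq> p"
  shows "p \<otimes> star p = star p \<otimes> p" "p \<otimes> p = star p \<otimes> star p"
proof -
  have sp: "star p \<in> carrier G" using p star_closed by auto
  have n1: "p \<otimes> star p \<noteq> p \<otimes> p" using p sp by simp
  have n2: "p \<otimes> star p \<noteq> star p \<otimes> star p" using p sp by simp
  have n3: "p \<otimes> p \<noteq> star p \<otimes> p" using p sp by simp
  have n4: "p \<otimes> p \<noteq> p \<otimes> star p" using p sp by simp
  show "p \<otimes> star p = star p \<otimes> p"
  proof (rule ccontr)
    assume h: "p \<otimes> star p \<noteq> star p \<otimes> p"
    have "\<sigma> p + \<sigma> p = 0"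
      using rel_UU[OF p p, of "p \<otimes> star p"] p sp n1 n2 h by simp
    then have "2 * \<sigma> p = 0" by (metis mult_2)
    then show False using unit_two \<sigma>_unit p by blast
  qed
  show "p \<otimes> p = star p \<otimes> star p"
  proof (rule ccontr)
    assume h: "p \<otimes> p \<noteq> star p \<otimes> star p"
    have "(1::'r) + 1 = 0"
      using rel_UU[OF p p, of "p \<otimes> p"] p sp n3 n4 h by simp
    then show False using two_ne_zero by (metis one_add_one)
  qed
qed

definition cc :: "'g \<Rightarrow> 'g" where "cc p = star p \<otimes> inv p"

lemma cc_facts:
  assumes p: "p \<in> carrier G" "star p \<noteq> p"
  shows "cc p \<in> carrier G" "star p = cc p \<otimes> p" "cc p \<otimes> p = p \<otimes> cc p" "cc p \<otimes> cc p = \<one>" "cc p \<noteq> \<one>"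
proof -
  have sp: "star p \<in> carrier G" using p star_closed by auto
  note s = sq_facts[OF p]
  show c: "cc p \<in> carrier G" using sp p by (simp add: cc_def)
  show e: "star p = cc p \<otimes> p" using sp p by (simp add: cc_def m_assoc)
  show com: "cc p \<otimes> p = p \<otimes> cc p" using sp p s(1) unfolding cc_def
    by (metis inv_closed inv_solve_right m_assoc m_closed)
  have "cc p \<otimes> cc p \<otimes> (p \<otimes> p) = (cc p \<otimes> p) \<otimes> (cc p \<otimes> p)"
    using c p com by (metis m_assoc m_closed)
  also have "\<dots> = p \<otimes> p" using e s(2) by simp
  also have "\<dots> = \<one> \<otimes> (p \<otimes> p)" using p by simp
  finally show "cc p \<otimes> cc p = \<one>" using c p by (metis m_closed one_closed right_cancel)
  show "cc p \<noteq> \<one>" using e p by auto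
qed


lemma kk: "x \<in> carrier G \<Longrightarrow> y \<in> carrier G \<Longrightarrow> r \<in> carrier G \<Longrightarrow> (inv x \<otimes> inv y \<otimes> x \<otimes> y = r) = (x \<otimes> y = y \<otimes> x \<otimes> r)"
  using m_assoc inv_solve_left' by simp

lemma cw2: "x \<in> carrier G \<Longrightarrow> y \<in> carrier G \<Longrightarrow> c \<in> carrier G \<Longrightarrow> c \<otimes> (x \<otimes> y) = x \<otimes> y \<otimes> c \<Longrightarrow> c \<otimes> c = \<one> \<Longrightarrow> c \<otimes> (x \<otimes> y) = y \<otimes> x \<Longrightarrow> inv x \<otimes> inv y \<otimes> x \<otimes> y = c"
proof -
  assume xyc: "x \<in> carrier G" "y \<in> carrier G" "c \<in> carrier G" and h1: "c \<otimes> (x \<otimes> y) = x \<otimes> y \<otimes> c" and h2: "c \<otimes> c = \<one>" and h3: "c \<otimes> (x \<otimes> y) = y \<otimes> x"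
  have "y \<otimes> x \<otimes> c = x \<otimes> y \<otimes> c \<otimes> c" using h1 h3 by simp
  also have "\<dots> = x \<otimes> y" using xyc h2 by (simp add: m_assoc)
  finally show ?thesis using kk xyc by simp
qed

lemma main:
  assumes x: "x \<in> carrier G" "star x \<noteq> x" and y: "y \<in> carrier G" "star y \<noteq> y"
  shows "(gcomm G x y = \<one> \<longrightarrow>
            cstar G star x = cstar G star y
          \<and> 2 * (1 + \<sigma> (x \<otimes> y)) = 0
          \<and> 2 * (\<sigma> x + \<sigma> y) = 0)
       \<and> (gcomm G x y \<noteq> \<one> \<longrightarrow>
            (gcomm G x y = cstar G star x \<and> cstar G star x = cstar G star y
               \<and> cstar G star y = cstar G star (x \<otimes> y)
               \<and> 1 + \<sigma> x + \<sigma> y + \<sigma> (x \<otimes> y) = 0)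
          \<or> (gcomm G x y = cstar G star x \<and> cstar G star x \<noteq> cstar G star y
               \<and> cstar G star y = cstar G star (x \<otimes> y) \<and> \<sigma> x = -1)
          \<or> (gcomm G x y = cstar G star y \<and> cstar G star y \<noteq> cstar G star x
               \<and> cstar G star x = cstar G star (x \<otimes> y) \<and> \<sigma> y = -1)
          \<or> (gcomm G x y = cstar G star (x \<otimes> y)
               \<and> cstar G star (x \<otimes> y) \<noteq> cstar G star x
               \<and> cstar G star x = cstar G star y
               \<and> \<sigma> (x \<otimes> y) = -1 \<and> \<sigma> x = - \<sigma> y))"
proof -
  define a where "a = cc x"
  define b where "b = cc y"
  note cx = cc_facts[OF x, folded a_def] and cy = cc_facts[OF y, folded b_def]
  interpret gx: gctx G x y a b
    by (unfold_locales) (use x y cx cy in auto)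
  have ac: "a \<in> carrier G" and bc: "b \<in> carrier G" using cx cy by auto
  have sx: "star x = a \<otimes> x" and sy: "star y = b \<otimes> y" using cx cy by auto
  have a1: "a \<noteq> \<one>" and b1: "b \<noteq> \<one>" using cx cy by auto
  have cstx: "cstar G star x = a" and csty: "cstar G star y = b"
    by (simp_all add: cstar_def a_def b_def cc_def)
  have cstw: "cstar G star (x \<otimes> y) = cc (x \<otimes> y)" by (simp add: cstar_def cc_def)
  have gk: "gcomm G x y = inv x \<otimes> inv y \<otimes> x \<otimes> y" by (simp add: gcomm_def)
  have uX: "\<sigma> x dvd 1" and uY: "\<sigma> y dvd 1" using \<sigma>_unit x y by auto
  have uXY: "\<sigma> x * \<sigma> y dvd 1" using mult_dvd_mono[OF uX uY] by simp
  have uYX: "\<sigma> y * \<sigma> x dvd 1" using mult_dvd_mono[OF uY uX] by simp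
  have sxy: "\<sigma> (x \<otimes> y) = \<sigma> x * \<sigma> y" using \<sigma>_hom x y by simp
  have four: "(4::'r) = 0"
  proof -
    have D1: "D \<one> \<in> S_set G star \<sigma>" by (rule D_in_S1) (auto simp: star_one sigma_one)
    have "(2::'r) + 2 = 0" using rel_DU[OF one_closed D1 x x(1)] x sx ac by simp
    then show ?thesis by simp
  qed
  have R: "\<And>z. z \<in> carrier G \<Longrightarrow>
     (if z = x \<otimes> y then 1 else 0) + (if z = x \<otimes> (b \<otimes> y) then \<sigma> y else 0)
     + (if z = a \<otimes> x \<otimes> y then \<sigma> x else 0) + (if z = a \<otimes> x \<otimes> (b \<otimes> y) then \<sigma> x * \<sigma> y else 0)
     + ((if z = y \<otimes> x then 1 else 0) + (if z = y \<otimes> (a \<otimes> x) then \<sigma> x else 0)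
     + (if z = b \<otimes> y \<otimes> x then \<sigma> y else 0) + (if z = b \<otimes> y \<otimes> (a \<otimes> x) then \<sigma> y * \<sigma> x else 0)) = (0::'r)"
    using rel_UU[OF x y] unfolding sx sy by blast
  show ?thesis
  proof (cases "x \<otimes> y = y \<otimes> x")
    case True
    have k1: "gcomm G x y = \<one>" using gk kk[OF x(1) y(1) one_closed] True x y by simp
    have iT: "(if x \<otimes> y = y \<otimes> x then (1::'r) else 0) = 1" using True by simp
    have nA2: "x \<otimes> y \<noteq> x \<otimes> (b \<otimes> y)" using gx.n1 b1 .
    have nA3: "x \<otimes> y \<noteq> a \<otimes> x \<otimes> y" using gx.n2 a1 .
    have nB2: "x \<otimes> y \<noteq> y \<otimes> (a \<otimes> x)" using gx.ic3 True a1 .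
    have nB3: "x \<otimes> y \<noteq> b \<otimes> y \<otimes> x" using gx.ic4 True b1 .
    have E: "2 + ((if x \<otimes> y = a \<otimes> x \<otimes> (b \<otimes> y) then \<sigma> x * \<sigma> y else 0)
       + (if x \<otimes> y = b \<otimes> y \<otimes> (a \<otimes> x) then \<sigma> y * \<sigma> x else 0)) = 0"
      using R[of "x \<otimes> y"] x y nA2 nA3 nB2 nB3 iT by simp
    have A4: "x \<otimes> y = a \<otimes> x \<otimes> (b \<otimes> y)" and B4: "x \<otimes> y = b \<otimes> y \<otimes> (a \<otimes> x)"
      and E2: "2 * (1 + \<sigma> x * \<sigma> y) = 0"
    proof -
      have "(x \<otimes> y = a \<otimes> x \<otimes> (b \<otimes> y)) \<and> (x \<otimes> y = b \<otimes> y \<otimes> (a \<otimes> x))"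
      proof (cases "x \<otimes> y = a \<otimes> x \<otimes> (b \<otimes> y)"; cases "x \<otimes> y = b \<otimes> y \<otimes> (a \<otimes> x)")
        assume "x \<otimes> y \<noteq> a \<otimes> x \<otimes> (b \<otimes> y)" "x \<otimes> y = b \<otimes> y \<otimes> (a \<otimes> x)"
        then have "2 + \<sigma> y * \<sigma> x = 0" using E by (simp add: add.commute)
        then show ?thesis using unit_two_plus[OF four uYX] by simp
      next
        assume "x \<otimes> y = a \<otimes> x \<otimes> (b \<otimes> y)" "x \<otimes> y \<noteq> b \<otimes> y \<otimes> (a \<otimes> x)"
        then have "2 + \<sigma> x * \<sigma> y = 0" using E by (simp add: add.commute)
        then show ?thesis using unit_two_plus[OF four uXY] by simp
      next
        assume "x \<otimes> y \<noteq> a \<otimes> x \<otimes> (b \<otimes> y)" "x \<otimes> y \<noteq> b \<otimes> y \<otimes> (a \<otimes> x)"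
        then have "(2::'r) = 0" using E by simp
        then show ?thesis using two_ne_zero by simp
      qed simp
      then show "x \<otimes> y = a \<otimes> x \<otimes> (b \<otimes> y)" "x \<otimes> y = b \<otimes> y \<otimes> (a \<otimes> x)" by auto
      then have "2 + (\<sigma> x * \<sigma> y + \<sigma> y * \<sigma> x) = 0" using E by simp
      then show "2 * (1 + \<sigma> x * \<sigma> y) = 0" by (simp add: algebra_simps)
    qed
    have ab: "a = b" using gx.e1 A4 by simp
    have i1: "x \<otimes> (b \<otimes> y) = a \<otimes> x \<otimes> y" using gx.e2 ab by simp
    have i2: "x \<otimes> (b \<otimes> y) \<noteq> a \<otimes> x \<otimes> (b \<otimes> y)" using gx.n3 a1 .
    have i3: "x \<otimes> (b \<otimes> y) \<noteq> y \<otimes> x" using nA2 True by simp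
    have i4: "y \<otimes> (a \<otimes> x) = x \<otimes> (b \<otimes> y)" using gx.ic1 True ab .
    have i5: "b \<otimes> y \<otimes> x = x \<otimes> (b \<otimes> y)" using gx.ic2 True ab .
    have i6: "x \<otimes> (b \<otimes> y) \<noteq> b \<otimes> y \<otimes> (a \<otimes> x)" using nA2 B4 by simp
    have "\<sigma> y + \<sigma> x + (\<sigma> x + \<sigma> y) = 0"
      using R[of "x \<otimes> (b \<otimes> y)"] x y ac bc nA2 i1 i2 i3 i4 i5 i6 by simp
    then have E3: "2 * (\<sigma> x + \<sigma> y) = 0" by (simp add: algebra_simps)
    show ?thesis using k1 cstx csty ab sxy E2 E3 by simp
  next
    case False
    note nc = False
    have k1: "gcomm G x y \<noteq> \<one>" using gk kk[OF x(1) y(1) one_closed] False x y by simp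
    have kA: "(gcomm G x y = a) = (x \<otimes> y = y \<otimes> (a \<otimes> x))" using gk kk[OF x(1) y(1) ac] gx.ka by simp
    have w: "x \<otimes> y \<in> carrier G" using x y by simp
    have sw: "star (x \<otimes> y) = b \<otimes> y \<otimes> (a \<otimes> x)" using star_mult x y sx sy by simp
    have sigw: "\<sigma> (x \<otimes> y) = \<sigma> x * \<sigma> y" by (rule sxy)
    have nA2: "x \<otimes> y \<noteq> x \<otimes> (b \<otimes> y)" using gx.n1 b1 .
    have nA3: "x \<otimes> y \<noteq> a \<otimes> x \<otimes> y" using gx.n2 a1 .
    have n3: "x \<otimes> (b \<otimes> y) \<noteq> a \<otimes> x \<otimes> (b \<otimes> y)" using gx.n3 a1 .
    have n4: "a \<otimes> x \<otimes> y \<noteq> a \<otimes> x \<otimes> (b \<otimes> y)" using gx.n4 b1 .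
    have n5: "y \<otimes> x \<noteq> y \<otimes> (a \<otimes> x)" using gx.n5 a1 .
    have n6: "y \<otimes> x \<noteq> b \<otimes> y \<otimes> x" using gx.n6 b1 .
    have n7: "y \<otimes> (a \<otimes> x) \<noteq> b \<otimes> y \<otimes> (a \<otimes> x)" using gx.n7 b1 .
    have n8: "b \<otimes> y \<otimes> x \<noteq> b \<otimes> y \<otimes> (a \<otimes> x)" using gx.n8 a1 .
    have Rc: "\<And>z. z \<in> carrier G \<Longrightarrow> z = z" by simp
    show ?thesis
    proof (cases "a = b")
      case ab: True
      have e1: "x \<otimes> y = a \<otimes> x \<otimes> (b \<otimes> y)" using gx.e1 ab by simp
      have e2: "x \<otimes> (b \<otimes> y) = a \<otimes> x \<otimes> y" using gx.e2 ab by simp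
      have e3: "y \<otimes> x = b \<otimes> y \<otimes> (a \<otimes> x)" using gx.e3 ab by simp
      have e4: "y \<otimes> (a \<otimes> x) = b \<otimes> y \<otimes> x" using gx.e4 ab by simp
      have nB: "x \<otimes> (b \<otimes> y) \<noteq> y \<otimes> (a \<otimes> x)" using gx.ab1 False ab .
      have swy: "star (x \<otimes> y) = y \<otimes> x" using sw e3 by simp
      have swn: "star (x \<otimes> y) \<noteq> x \<otimes> y" using swy False by simp
      note cw = cc_facts[OF w swn]
      have gw: "gcomm G x y = cc (x \<otimes> y)"
        using gk cw2[OF x(1) y(1) cw(1)] cw swy x y by simp
      show ?thesis
      proof (cases "x \<otimes> y = y \<otimes> (a \<otimes> x)")
        case P: True
        have f3: "x \<otimes> y = b \<otimes> y \<otimes> x" using P e4 by simp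
        have f4: "x \<otimes> y \<noteq> b \<otimes> y \<otimes> (a \<otimes> x)" using False e3 by simp
        have "1 + \<sigma> x + \<sigma> y + \<sigma> x * \<sigma> y = 0"
          using R[of "x \<otimes> y"] x y ac bc nA2 nA3 False f4
          by (simp add: if_P[OF e1] if_P[OF P] if_P[OF f3] algebra_simps)
        moreover have "gcomm G x y = a" using kA P by simp
        ultimately show ?thesis using cstx csty cstw gw ab sigw k1 by simp
      next
        case P: False
        have f3: "x \<otimes> y \<noteq> b \<otimes> y \<otimes> x" using P e4 by simp
        have f4: "x \<otimes> y \<noteq> b \<otimes> y \<otimes> (a \<otimes> x)" using False e3 by simp
        have E1: "1 + \<sigma> x * \<sigma> y = 0"
          using R[of "x \<otimes> y"] x y ac bc nA2 nA3 False f4 P f3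
          by (simp add: if_P[OF e1] algebra_simps)
        have f5: "x \<otimes> (b \<otimes> y) \<noteq> b \<otimes> y \<otimes> x" using nB e4 by simp
        have E2: "\<sigma> x + \<sigma> y = 0"
        proof (cases "x \<otimes> (b \<otimes> y) = y \<otimes> x")
          case True
          have f6: "x \<otimes> (b \<otimes> y) = b \<otimes> y \<otimes> (a \<otimes> x)" using True e3 by simp
          have "\<sigma> x + \<sigma> y + (1 + \<sigma> x * \<sigma> y) = 0"
            using R[of "x \<otimes> (b \<otimes> y)"] x y ac bc nA2 n3 nB f5
            by (simp add: if_P[OF e2] if_P[OF True] if_P[OF f6] algebra_simps)
          then show ?thesis using E1 by simp
        next
          case False
          have f6: "x \<otimes> (b \<otimes> y) \<noteq> b \<otimes> y \<otimes> (a \<otimes> x)" using False e3 by simp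
          show ?thesis
            using R[of "x \<otimes> (b \<otimes> y)"] x y ac bc nA2 n3 nB f5 False f6
            by (simp add: if_P[OF e2] algebra_simps)
        qed
        have "gcomm G x y \<noteq> a" using kA P by simp
        moreover have "\<sigma> x = - \<sigma> y" using E2 by (simp add: eq_neg_iff_add_eq_0)
        moreover have "\<sigma> x * \<sigma> y = -1" using E1 by (simp add: eq_neg_iff_add_eq_0 add.commute)
        ultimately show ?thesis using cstx csty cstw gw ab sigw k1 by simp
      qed
    next
      case ab: False
      have d1: "x \<otimes> y \<noteq> a \<otimes> x \<otimes> (b \<otimes> y)" using gx.e1 ab by simp
      have d2: "x \<otimes> (b \<otimes> y) \<noteq> a \<otimes> x \<otimes> y" using gx.e2 ab by simp
      have d3: "y \<otimes> x \<noteq> b \<otimes> y \<otimes> (a \<otimes> x)" using gx.e3 ab by simp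
      have d4: "y \<otimes> (a \<otimes> x) \<noteq> b \<otimes> y \<otimes> x" using gx.e4 ab by simp
      consider (al) "x \<otimes> y = b \<otimes> y \<otimes> (a \<otimes> x)" | (be) "x \<otimes> y = y \<otimes> (a \<otimes> x)"
        | (ga) "x \<otimes> y = b \<otimes> y \<otimes> x" | (no) "x \<otimes> y \<noteq> b \<otimes> y \<otimes> (a \<otimes> x)" "x \<otimes> y \<noteq> y \<otimes> (a \<otimes> x)" "x \<otimes> y \<noteq> b \<otimes> y \<otimes> x"
        by blast
      then show ?thesis
      proof cases
        case al
        have f2: "x \<otimes> y \<noteq> y \<otimes> (a \<otimes> x)" using al n7 by simp
        have f3: "x \<otimes> y \<noteq> b \<otimes> y \<otimes> x" using al n8 by simp
        have E1: "1 + \<sigma> x * \<sigma> y = 0"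
          using R[of "x \<otimes> y"] x y ac bc nA2 nA3 d1 False f2 f3
          by (simp add: if_P[OF al] algebra_simps)
        have sww: "star (x \<otimes> y) = x \<otimes> y" using sw al by simp
        have sgn: "\<sigma> (x \<otimes> y) = - 1" using E1 sigw by (simp add: eq_neg_iff_add_eq_0 add.commute)
        have sg1: "\<sigma> (x \<otimes> y) \<noteq> 1"
        proof
          assume "\<sigma> (x \<otimes> y) = 1"
          then have "(1::'r) + 1 = 0" using sgn by simp
          then show False using two_ne_zero by (metis one_add_one)
        qed
        have "2 * (1 - \<sigma> (x \<otimes> y)) = (4::'r)" using sgn by simp
        then have sg2: "2 * (1 - \<sigma> (x \<otimes> y)) = 0" using four by simp
        have Dw: "D (x \<otimes> y) \<in> S_set G star \<sigma>" by (rule D_in_S2[OF w sww sg1 sg2])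
        have r1: "x \<otimes> y \<otimes> y \<noteq> x \<otimes> y \<otimes> (b \<otimes> y)" using gx.al2 b1 .
        have r2: "x \<otimes> y \<otimes> y \<noteq> y \<otimes> (x \<otimes> y)" using gx.al3 False .
        have r3: "x \<otimes> y \<otimes> y \<noteq> b \<otimes> y \<otimes> (x \<otimes> y)"
        proof
          assume "x \<otimes> y \<otimes> y = b \<otimes> y \<otimes> (x \<otimes> y)"
          then have "x \<otimes> y = b \<otimes> y \<otimes> x" using gx.al1 by simp
          then show False using al n8 by simp
        qed
        have "(2::'r) = 0"
          using rel_DU[OF w Dw y, of "x \<otimes> y \<otimes> y"] x y bc r1 r2 r3 unfolding sy by simp
        then show ?thesis using two_ne_zero by simp
      next
        case be
        have f3: "x \<otimes> y \<noteq> b \<otimes> y \<otimes> x" using be d4 by simp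
        have f4: "x \<otimes> y \<noteq> b \<otimes> y \<otimes> (a \<otimes> x)" using be n7 by simp
        have E1: "1 + \<sigma> x = 0"
          using R[of "x \<otimes> y"] x y ac bc nA2 nA3 d1 False f3 f4
          by (simp add: if_P[OF be] algebra_simps)
        have g3: "a \<otimes> x \<otimes> y \<noteq> b \<otimes> y \<otimes> (a \<otimes> x)" using gx.be1 be ab by blast
        have A2B4: "x \<otimes> (b \<otimes> y) = b \<otimes> y \<otimes> (a \<otimes> x)"
        proof (rule ccontr)
          assume h: "x \<otimes> (b \<otimes> y) \<noteq> b \<otimes> y \<otimes> (a \<otimes> x)"
          show False
          proof (cases "a \<otimes> x \<otimes> (b \<otimes> y) = b \<otimes> y \<otimes> (a \<otimes> x)")
            case True
            have "\<sigma> x * \<sigma> y + \<sigma> x * \<sigma> y = 0"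
              using R[of "b \<otimes> y \<otimes> (a \<otimes> x)"] x y ac bc f4 h g3 d3 n7 n8
              by (simp add: if_P[OF True[symmetric]] algebra_simps)
            then show False using unit_two[OF uXY] by (metis mult_2)
          next
            case False
            have "\<sigma> y * \<sigma> x = 0"
              using R[of "b \<otimes> y \<otimes> (a \<otimes> x)"] x y ac bc f4 h g3 d3 n7 n8 False
              by (simp add: algebra_simps)
            then show False using unit_ne[OF uYX] by simp
          qed
        qed
        have swb: "star (x \<otimes> y) = x \<otimes> y \<otimes> b" using sw A2B4 gx.wb by simp
        have swn: "star (x \<otimes> y) \<noteq> x \<otimes> y" using swb w bc b1 by simp
        note cw = cc_facts[OF w swn]
        have "x \<otimes> y \<otimes> cc (x \<otimes> y) = x \<otimes> y \<otimes> b" using cw swb by simp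
        then have cwb: "cc (x \<otimes> y) = b" using w bc cw(1) by simp
        have "gcomm G x y = a" using kA be by simp
        moreover have "\<sigma> x = -1" using E1 by (simp add: eq_neg_iff_add_eq_0 add.commute)
        ultimately show ?thesis using cstx csty cstw cwb ab k1 by simp
      next
        case ga
        have f2: "x \<otimes> y \<noteq> y \<otimes> (a \<otimes> x)" using ga d4 by simp
        have f4: "x \<otimes> y \<noteq> b \<otimes> y \<otimes> (a \<otimes> x)" using ga n8 by simp
        have E1: "1 + \<sigma> y = 0"
          using R[of "x \<otimes> y"] x y ac bc nA2 nA3 d1 False f2 f4
          by (simp add: if_P[OF ga] algebra_simps)
        have g2: "x \<otimes> (b \<otimes> y) \<noteq> b \<otimes> y \<otimes> (a \<otimes> x)" using gx.ga1 ga ab by blast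
        have A3B4: "a \<otimes> x \<otimes> y = b \<otimes> y \<otimes> (a \<otimes> x)"
        proof (rule ccontr)
          assume h: "a \<otimes> x \<otimes> y \<noteq> b \<otimes> y \<otimes> (a \<otimes> x)"
          show False
          proof (cases "a \<otimes> x \<otimes> (b \<otimes> y) = b \<otimes> y \<otimes> (a \<otimes> x)")
            case True
            have "\<sigma> x * \<sigma> y + \<sigma> x * \<sigma> y = 0"
              using R[of "b \<otimes> y \<otimes> (a \<otimes> x)"] x y ac bc f4 h g2 d3 n7 n8
              by (simp add: if_P[OF True[symmetric]] algebra_simps)
            then show False using unit_two[OF uXY] by (metis mult_2)
          next
            case False
            have "\<sigma> y * \<sigma> x = 0"
              using R[of "b \<otimes> y \<otimes> (a \<otimes> x)"] x y ac bc f4 h g2 d3 n7 n8 False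
              by (simp add: algebra_simps)
            then show False using unit_ne[OF uYX] by simp
          qed
        qed
        have cwa: "cc (x \<otimes> y) = a"
        proof -
          have swn: "star (x \<otimes> y) \<noteq> x \<otimes> y" using sw A3B4 nA3 by simp
          note cw = cc_facts[OF w swn]
          have "cc (x \<otimes> y) \<otimes> (x \<otimes> y) = a \<otimes> (x \<otimes> y)" using cw sw A3B4 gx.wa by simp
          then show ?thesis using w ac cw(1) by simp
        qed
        have g1: "a \<otimes> x \<otimes> y \<noteq> y \<otimes> x" using gx.ga2 ga ab by blast
        have A2B1: "x \<otimes> (b \<otimes> y) = y \<otimes> x"
        proof (rule ccontr)
          assume h: "x \<otimes> (b \<otimes> y) \<noteq> y \<otimes> x"
          show False
          proof (cases "a \<otimes> x \<otimes> (b \<otimes> y) = y \<otimes> x")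
            case A4B1: True
            have g5: "a \<otimes> x \<otimes> y \<noteq> y \<otimes> (a \<otimes> x)"
            proof
              assume h3: "a \<otimes> x \<otimes> y = y \<otimes> (a \<otimes> x)"
              have h4: "y \<otimes> (a \<otimes> x) \<noteq> x \<otimes> (b \<otimes> y)" using d2 h3 by simp
              have h5: "y \<otimes> (a \<otimes> x) \<noteq> a \<otimes> x \<otimes> (b \<otimes> y)" using A4B1 n5 by simp
              have "\<sigma> x + \<sigma> x = 0"
                using R[of "y \<otimes> (a \<otimes> x)"] x y ac bc f2 h4 h5 d4 n5 n7
                by (simp add: if_P[OF h3[symmetric]])
              then show False using unit_two[OF uX] by (metis mult_2)
            qed
            have A2B2: "x \<otimes> (b \<otimes> y) = y \<otimes> (a \<otimes> x)"
            proof (rule ccontr)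
              assume h6: "x \<otimes> (b \<otimes> y) \<noteq> y \<otimes> (a \<otimes> x)"
              have h5: "y \<otimes> (a \<otimes> x) \<noteq> a \<otimes> x \<otimes> (b \<otimes> y)" using A4B1 n5 by simp
              have "\<sigma> x = 0"
                using R[of "y \<otimes> (a \<otimes> x)"] x y ac bc f2 h6 g5 h5 d4 n5 n7 by simp
              then show False using unit_ne[OF uX] by simp
            qed
            define g where "g = x \<otimes> (a \<otimes> x)"
            have gc: "g \<in> carrier G" using x ac by (simp add: g_def)
            have gsx: "g = x \<otimes> star x" using sx by (simp add: g_def)
            have sg: "star g = g" using gsx star_mult star_star star_closed x by simp
            have sg1: "\<sigma> g = 1" using gsx \<sigma>_compat x by simp
            have Dg: "D g \<in> S_set G star \<sigma>" by (rule D_in_S1[OF gc sg sg1])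
            have yg: "y \<otimes> g = a \<otimes> g \<otimes> y" unfolding g_def using gx.gc3 ga A4B1 A2B2 by blast
            have r1: "g \<otimes> y \<noteq> g \<otimes> (b \<otimes> y)" using gc y bc b1 by simp
            have r2: "g \<otimes> y \<noteq> y \<otimes> g" using gx.gc4 gc a1 yg by blast
            have r3: "g \<otimes> y \<noteq> b \<otimes> y \<otimes> g" using gx.gc5 gc ab yg by blast
            have "(2::'r) = 0"
              using rel_DU[OF gc Dg y, of "g \<otimes> y"] gc y bc r1 r2 r3 unfolding sy by simp
            then show False using two_ne_zero by simp
          next
            case False
            have "(1::'r) = 0"
              using R[of "y \<otimes> x"] x y ac bc nc h g1 False n5 n6 d3 by simp
            then show False using one_ne_zero by simp
          qed
        qed
        have "gcomm G x y = b" using gk kk[OF x(1) y(1) bc] gx.kb A2B1 by simp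
        moreover have "\<sigma> y = -1" using E1 by (simp add: eq_neg_iff_add_eq_0 add.commute)
        ultimately show ?thesis using cstx csty cstw cwa ab k1 by auto
      next
        case no
        have "(1::'r) = 0"
          using R[of "x \<otimes> y"] x y ac bc nA2 nA3 d1 False no by simp
        then show ?thesis using one_ne_zero by simp
      qed
    qed
  qed
qed

end
theorem lemma3p13:
  fixes G :: "('g, 'm) monoid_scheme" and star :: "'g \<Rightarrow> 'g"
    and \<sigma> :: "'g \<Rightarrow> 'r::comm_ring_1" and x y :: 'g
  assumes grp: "group G"
    and charR: "CHAR('r) \<noteq> 2"
    and star_closed: "\<forall>a\<in>carrier G. star a \<in> carrier G"
    and star_mult: "\<forall>a\<in>carrier G. \<forall>b\<in>carrier G. star (a \<otimes>\<^bsub>G\<^esub> b) = star b \<otimes>\<^bsub>G\<^esub> star a"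
    and star_star: "\<forall>a\<in>carrier G. star (star a) = a"
    and \<sigma>_unit: "\<forall>a\<in>carrier G. \<sigma> a dvd 1"
    and \<sigma>_hom: "\<forall>a\<in>carrier G. \<forall>b\<in>carrier G. \<sigma> (a \<otimes>\<^bsub>G\<^esub> b) = \<sigma> a * \<sigma> b"
    and \<sigma>_nontriv: "\<exists>a\<in>carrier G. \<sigma> a \<noteq> 1"
    and \<sigma>_compat: "\<forall>a\<in>carrier G. \<sigma> (a \<otimes>\<^bsub>G\<^esub> star a) = 1"
    and anti: "S_anticomm G star \<sigma>"
    and x: "x \<in> carrier G" "star x \<noteq> x"
    and y: "y \<in> carrier G" "star y \<noteq> y"
  shows "(gcomm G x y = \<one>\<^bsub>G\<^esub> \<longrightarrow>
            cstar G star x = cstar G star y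
          \<and> 2 * (1 + \<sigma> (x \<otimes>\<^bsub>G\<^esub> y)) = 0
          \<and> 2 * (\<sigma> x + \<sigma> y) = 0)
       \<and> (gcomm G x y \<noteq> \<one>\<^bsub>G\<^esub> \<longrightarrow>
            (gcomm G x y = cstar G star x \<and> cstar G star x = cstar G star y
               \<and> cstar G star y = cstar G star (x \<otimes>\<^bsub>G\<^esub> y)
               \<and> 1 + \<sigma> x + \<sigma> y + \<sigma> (x \<otimes>\<^bsub>G\<^esub> y) = 0)
          \<or> (gcomm G x y = cstar G star x \<and> cstar G star x \<noteq> cstar G star y
               \<and> cstar G star y = cstar G star (x \<otimes>\<^bsub>G\<^esub> y) \<and> \<sigma> x = -1)
          \<or> (gcomm G x y = cstar G star y \<and> cstar G star y \<noteq> cstar G star x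
               \<and> cstar G star x = cstar G star (x \<otimes>\<^bsub>G\<^esub> y) \<and> \<sigma> y = -1)
          \<or> (gcomm G x y = cstar G star (x \<otimes>\<^bsub>G\<^esub> y)
               \<and> cstar G star (x \<otimes>\<^bsub>G\<^esub> y) \<noteq> cstar G star x
               \<and> cstar G star x = cstar G star y
               \<and> \<sigma> (x \<otimes>\<^bsub>G\<^esub> y) = -1 \<and> \<sigma> x = - \<sigma> y))"
  proof -
  have one: "(1::'r) \<noteq> 0"
  proof
    assume h: "(1::'r) = 0"
    obtain a where "a \<in> carrier G" "\<sigma> a \<noteq> 1" using \<sigma>_nontriv by blast
    moreover have "\<sigma> a = 1" using h by (metis mult_1_right mult_zero_right)
    ultimately show False by simp
  qed
  have two: "(2::'r) \<noteq> 0"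
  proof
    assume h: "(2::'r) = 0"
    have "of_nat 2 = (0::'r)" using h by simp
    then have "CHAR('r) dvd 2" by (simp only: of_nat_eq_0_iff_char_dvd)
    then have d: "CHAR('r) dvd 2" .
    have le: "CHAR('r) \<le> 2" using d by (rule dvd_imp_le) simp
    have nz: "CHAR('r) \<noteq> 0" using d by (metis dvd_0_left_iff zero_neq_numeral)
    have "CHAR('r) = 1" using charR le nz by linarith
    then have "of_nat 1 = (0::'r)" by (metis of_nat_CHAR)
    then show False using one by simp
  qed
  interpret actx G star \<sigma>
    by (intro actx.intro[OF grp] actx_axioms.intro) (use star_closed star_mult star_star \<sigma>_unit \<sigma>_hom \<sigma>_compat anti one two in auto)
  show ?thesis using main[OF x y] .
qed

end
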